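(* Let $T$ be a standard Young tableau of shape $\lambda\vdash k$. Then for $n\ge k$, the number of standard Young tableaux with $n$ cells (of any shape) that contain $T$ as a subtableau, i.e., in which the cells with entries $1,\ldots,k$ form exactly $T$, equals $$\sum_{j=0}^{k}\sum_{\mu\vdash j}f^{\lambda/\mu}\binom{n-k}{k-j}t_{n-2k+j}.$$
   Context: $f^{\lambda/\mu}$ is the number of standard Young tableaux of skew shape $\lambda/\mu$ (zero if $\mu\not\subseteq\lambda$), with $f^{\lambda/\emptyset}=f^\lambda$. $t_m$ denotes the number of involutions in $\mathcal{S}_m$ ($t_0=1$), and terms with $k-j>n-k$ are $0$. *)

theory Defs
  imports "HOL-Combinatorics.Combinatorics"
begin

text \<open>Cells are pairs (row, column), 0-indexed.
  A partition of k corresponds to a Young diagram with k cells.\<close>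

definition young :: "(nat \<times> nat) set \<Rightarrow> bool" where
  "young D \<longleftrightarrow> finite D \<and>
     (\<forall>i j i' j'. (i, j) \<in> D \<and> i' \<le> i \<and> j' \<le> j \<longrightarrow> (i', j') \<in> D)"

text \<open>A standard Young tableau of skew shape lam/mu: a bijection from the cells of
  lam - mu onto {1..|lam - mu|}, increasing weakly (hence strictly) along rows and
  columns; the function is 0 outside the cells of the shape.\<close>

definition skew_syt :: "(nat \<times> nat) set \<Rightarrow> (nat \<times> nat) set \<Rightarrow> (nat \<times> nat \<Rightarrow> nat) \<Rightarrow> bool" where
  "skew_syt lam mu T \<longleftrightarrow>
     bij_betw T (lam - mu) {1..card (lam - mu)} \<and>
     (\<forall>c. c \<notin> lam - mu \<longrightarrow> T c = 0) \<and>
     (\<forall>i j i' j'. (i, j) \<in> lam - mu \<and> (i', j') \<in> lam - mu \<and> i \<le> i' \<and> j \<le> j'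
        \<longrightarrow> T (i, j) \<le> T (i', j'))"

definition syt :: "(nat \<times> nat) set \<Rightarrow> (nat \<times> nat \<Rightarrow> nat) \<Rightarrow> bool" where
  "syt lam T \<longleftrightarrow> skew_syt lam {} T"

definition skew_f :: "(nat \<times> nat) set \<Rightarrow> (nat \<times> nat) set \<Rightarrow> nat" where
  "skew_f lam mu = (if mu \<subseteq> lam then card {T. skew_syt lam mu T} else 0)"

definition num_involutions :: "nat \<Rightarrow> nat" where
  "num_involutions m = card {p. p permutes {..<m} \<and> p \<circ> p = id}"

definition restrict_le :: "nat \<Rightarrow> (nat \<times> nat \<Rightarrow> nat) \<Rightarrow> (nat \<times> nat \<Rightarrow> nat)" where
  "restrict_le k T = (\<lambda>c. if T c \<le> k then T c else 0)"

end

theory Submission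
  imports Defs
begin

lemma young_finite: "young D \<Longrightarrow> finite D" by (simp add: young_def)

lemma young_closed: "young D \<Longrightarrow> (i, j) \<in> D \<Longrightarrow> i' \<le> i \<Longrightarrow> j' \<le> j \<Longrightarrow> (i', j') \<in> D"
  unfolding young_def by blast

lemma young_Un: "young A \<Longrightarrow> young B \<Longrightarrow> young (A \<union> B)"
  unfolding young_def by blast

lemma young_Int: "young A \<Longrightarrow> young B \<Longrightarrow> young (A \<inter> B)"
  unfolding young_def by blast

lemma young_bound:
  assumes "young D" "(i, j) \<in> D"
  shows "i < card D \<and> j < card D"
proof -
  have f: "finite D" using assms young_finite by blast
  have "(\<lambda>x. (x, 0)) ` {..i} \<subseteq> D" using young_closed[OF assms] by auto
  hence "card ((\<lambda>x. (x, 0::nat)) ` {..i}) \<le> card D" using f card_mono by blast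
  moreover have "card ((\<lambda>x. (x, 0::nat)) ` {..i}) = Suc i"
    by (subst card_image) (auto simp: inj_on_def)
  moreover have "(\<lambda>x. (0, x)) ` {..j} \<subseteq> D" using young_closed[OF assms] by auto
  hence "card ((\<lambda>x. (0::nat, x)) ` {..j}) \<le> card D" using f card_mono by blast
  moreover have "card ((\<lambda>x. (0::nat, x)) ` {..j}) = Suc j"
    by (subst card_image) (auto simp: inj_on_def)
  ultimately show ?thesis by simp
qed

definition Y :: "nat \<Rightarrow> (nat \<times> nat) set set" where
  "Y j = {D. young D \<and> card D = j}"

lemma finite_Y: "finite (Y j)"
proof -
  have "Y j \<subseteq> Pow ({..<j} \<times> {..<j})"
    unfolding Y_def using young_bound by fastforce
  thus ?thesis by (rule finite_subset) auto
qed

definition addc :: "(nat \<times> nat) set \<Rightarrow> (nat \<times> nat) set" where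
  "addc D = {a. a \<notin> D \<and> young (insert a D)}"

definition remc :: "(nat \<times> nat) set \<Rightarrow> (nat \<times> nat) set" where
  "remc D = {b. b \<in> D \<and> young (D - {b})}"

lemma finite_addc: assumes "young D" shows "finite (addc D)"
proof -
  have "addc D \<subseteq> {..card D} \<times> {..card D}"
  proof
    fix a assume a: "a \<in> addc D"
    obtain i j where [simp]: "a = (i, j)" by (cases a)
    have y: "young (insert a D)" and n: "a \<notin> D" using a by (auto simp: addc_def)
    have "card (insert a D) = Suc (card D)" using n young_finite[OF assms] by simp
    thus "a \<in> {..card D} \<times> {..card D}" using young_bound[OF y, of i j] by auto
  qed
  thus ?thesis by (rule finite_subset) auto
qed

lemma finite_remc: "young D \<Longrightarrow> finite (remc D)"
  unfolding remc_def using young_finite by auto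

definition rl :: "(nat \<times> nat) set \<Rightarrow> nat \<Rightarrow> nat" where
  "rl D i = card {j. (i, j) \<in> D}"

lemma downclosed_eq:
  assumes "finite (S :: nat set)" "\<And>x y. x \<in> S \<Longrightarrow> y \<le> x \<Longrightarrow> y \<in> S"
  shows "S = {..<card S}"
proof -
  have sub: "S \<subseteq> {..<card S}"
  proof
    fix x assume x: "x \<in> S"
    have "{..x} \<subseteq> S" using assms(2) x by auto
    hence "card {..x} \<le> card S" using assms(1) card_mono by blast
    thus "x \<in> {..<card S}" by simp
  qed
  show ?thesis using card_subset_eq[OF _ sub] by simp
qed

lemma rl_mem: assumes "young D" shows "(i, j) \<in> D \<longleftrightarrow> j < rl D i"
proof -
  have fin: "finite {j. (i, j) \<in> D}"
  proof -
    have "{j. (i, j) \<in> D} \<subseteq> snd ` D" by force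
    thus ?thesis using young_finite[OF assms] finite_subset by blast
  qed
  have "{j. (i, j) \<in> D} = {..<rl D i}" unfolding rl_def
    by (rule downclosed_eq[OF fin]) (use young_closed[OF assms] in blast)
  thus ?thesis by blast
qed

lemma rl_anti: assumes "young D" shows "rl D (Suc i) \<le> rl D i"
proof (rule ccontr)
  assume "\<not> ?thesis"
  hence "(Suc i, rl D i) \<in> D" using rl_mem[OF assms] by simp
  hence "(i, rl D i) \<in> D" using young_closed[OF assms] by fastforce
  thus False using rl_mem[OF assms] by simp
qed

lemma young_insert_iff:
  assumes "young D" "(i, j) \<notin> D"
  shows "young (insert (i, j) D) \<longleftrightarrow> (0 < i \<longrightarrow> (i - 1, j) \<in> D) \<and> (0 < j \<longrightarrow> (i, j - 1) \<in> D)"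
proof
  assume y: "young (insert (i, j) D)"
  show "(0 < i \<longrightarrow> (i - 1, j) \<in> D) \<and> (0 < j \<longrightarrow> (i, j - 1) \<in> D)"
  proof safe
    assume "0 < i"
    hence "(i - 1, j) \<in> insert (i, j) D" using young_closed[OF y, of i j "i - 1" j] by simp
    thus "(i - 1, j) \<in> D" using \<open>0 < i\<close> by auto
  next
    assume "0 < j"
    hence "(i, j - 1) \<in> insert (i, j) D" using young_closed[OF y, of i j i "j - 1"] by simp
    thus "(i, j - 1) \<in> D" using \<open>0 < j\<close> by auto
  qed
next
  assume h: "(0 < i \<longrightarrow> (i - 1, j) \<in> D) \<and> (0 < j \<longrightarrow> (i, j - 1) \<in> D)"
  show "young (insert (i, j) D)"
    unfolding young_def
  proof (intro conjI allI impI)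
    show "finite (insert (i, j) D)" using young_finite[OF assms(1)] by simp
  next
    fix a b i' j' assume "(a, b) \<in> insert (i, j) D \<and> i' \<le> a \<and> j' \<le> b"
    hence "(a, b) \<in> insert (i, j) D" "i' \<le> a" "j' \<le> b" by auto
    show "(i', j') \<in> insert (i, j) D"
    proof (cases "(i', j') \<in> D")
      case True thus ?thesis by simp
    next
    case False
    hence "(i', j') \<notin> D" .
    from \<open>(a, b) \<in> insert (i, j) D\<close> consider "(a, b) = (i, j)" | "(a, b) \<in> D" by auto
    then have "i' = i \<and> j' = j"
    proof cases
      case 1
      show ?thesis
      proof (rule ccontr)
        assume ne: "\<not> (i' = i \<and> j' = j)"
        from 1 \<open>i' \<le> a\<close> \<open>j' \<le> b\<close> have le: "i' \<le> i" "j' \<le> j" by auto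
        show False
        proof (cases "i' < i")
          case True
          hence "0 < i" "i' \<le> i - 1" by auto
          hence im: "(i - 1, j) \<in> D" using h by simp
          show False using young_closed[OF assms(1) im \<open>i' \<le> i - 1\<close> le(2)] \<open>(i', j') \<notin> D\<close> by simp
        next
          case False
          hence "j' < j" using ne le by auto
          hence "0 < j" "j' \<le> j - 1" by auto
          hence jm: "(i, j - 1) \<in> D" using h by simp
          show False using young_closed[OF assms(1) jm le(1) \<open>j' \<le> j - 1\<close>] \<open>(i', j') \<notin> D\<close> by simp
        qed
      qed
    next
      case 2
      thus ?thesis using young_closed[OF assms(1)] \<open>i' \<le> a\<close> \<open>j' \<le> b\<close> \<open>(i', j') \<notin> D\<close> by blast
    qed
    thus ?thesis by simp
    qed
  qed
qed

lemma young_remove_iff: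
  assumes "young D" "(i, j) \<in> D"
  shows "young (D - {(i, j)}) \<longleftrightarrow> (Suc i, j) \<notin> D \<and> (i, Suc j) \<notin> D"
proof
  assume y: "young (D - {(i, j)})"
  show "(Suc i, j) \<notin> D \<and> (i, Suc j) \<notin> D"
    using young_closed[OF y, of "Suc i" j i j] young_closed[OF y, of i "Suc j" i j] by auto
next
  assume h: "(Suc i, j) \<notin> D \<and> (i, Suc j) \<notin> D"
  show "young (D - {(i, j)})"
    unfolding young_def
  proof (intro conjI allI impI)
    show "finite (D - {(i, j)})" using young_finite[OF assms(1)] by simp
  next
    fix a b i' j' assume H: "(a, b) \<in> D - {(i, j)} \<and> i' \<le> a \<and> j' \<le> b"
    hence "(i', j') \<in> D" using young_closed[OF assms(1)] by blast
    moreover have "(i', j') \<noteq> (i, j)"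
    proof
      assume "(i', j') = (i, j)"
      thus False using H h young_closed[OF assms(1), of a b "Suc i" j] young_closed[OF assms(1), of a b i "Suc j"]
        by (cases "i < a") auto
    qed
    ultimately show "(i', j') \<in> D - {(i, j)}" by simp
  qed
qed

lemma addc_char: assumes "young D"
  shows "(i, j) \<in> addc D \<longleftrightarrow> j = rl D i \<and> (0 < i \<longrightarrow> rl D i < rl D (i - 1))"
proof -
  have "(i, j) \<in> addc D \<longleftrightarrow> rl D i \<le> j \<and> (0 < i \<longrightarrow> j < rl D (i - 1)) \<and> (0 < j \<longrightarrow> j - 1 < rl D i)"
    unfolding addc_def using young_insert_iff[OF assms] rl_mem[OF assms] by auto
  thus ?thesis by auto
qed

lemma remc_char: assumes "young D"
  shows "(i, j) \<in> remc D \<longleftrightarrow> Suc j = rl D i \<and> rl D (Suc i) \<le> j"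
proof -
  have "(i, j) \<in> remc D \<longleftrightarrow> j < rl D i \<and> rl D (Suc i) \<le> j \<and> rl D i \<le> Suc j"
    unfolding remc_def using young_remove_iff[OF assms] rl_mem[OF assms]
    by (metis (no_types, lifting) mem_Collect_eq not_le)
  thus ?thesis by auto
qed

lemma card_addc: assumes "young D" shows "card (addc D) = Suc (card (remc D))"
proof -
  define f where "f = (\<lambda>(i::nat, j::nat). (Suc i, rl D (Suc i)))"
  define g where "g = (\<lambda>(i::nat, j::nat). (i - 1, rl D (i - 1) - 1))"
  have bij: "bij_betw f (remc D) (addc D - {(0, rl D 0)})"
  proof (rule bij_betw_byWitness[where f' = g])
    show "\<forall>a\<in>remc D. g (f a) = a"
    proof
      fix a assume a: "a \<in> remc D"
      obtain i j where ij: "a = (i, j)" by (cases a)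
      have "Suc j = rl D i" using a ij remc_char[OF assms] by simp
      thus "g (f a) = a" using ij by (simp add: f_def g_def)
    qed
    show "\<forall>a'\<in>addc D - {(0, rl D 0)}. f (g a') = a'"
    proof
      fix a' assume a': "a' \<in> addc D - {(0, rl D 0)}"
      obtain i j where ij: "a' = (i, j)" by (cases a')
      have "0 < i" using a' ij addc_char[OF assms] by (cases i) auto
      thus "f (g a') = a'" using a' ij addc_char[OF assms] by (auto simp: f_def g_def)
    qed
    show "f ` remc D \<subseteq> addc D - {(0, rl D 0)}"
    proof
      fix y assume "y \<in> f ` remc D"
      then obtain a where a: "a \<in> remc D" and y: "y = f a" by auto
      obtain i j where ij: "a = (i, j)" by (cases a)
      have "Suc j = rl D i" "rl D (Suc i) \<le> j" using a ij remc_char[OF assms] by auto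
      hence "(Suc i, rl D (Suc i)) \<in> addc D" using addc_char[OF assms] by simp
      thus "y \<in> addc D - {(0, rl D 0)}" using y ij by (simp add: f_def)
    qed
    show "g ` (addc D - {(0, rl D 0)}) \<subseteq> remc D"
    proof
      fix y assume "y \<in> g ` (addc D - {(0, rl D 0)})"
      then obtain a' where a': "a' \<in> addc D - {(0, rl D 0)}" and y: "y = g a'" by auto
      obtain i j where "a' = (i, j)" by (cases a')
      hence ij: "(i, j) \<in> addc D" "(i, j) \<noteq> (0, rl D 0)" using a' by auto
      have y: "y = g (i, j)" using y \<open>a' = (i, j)\<close> by simp
      have "0 < i" using ij addc_char[OF assms] by (cases i) auto
      hence "rl D i < rl D (i - 1)" "j = rl D i" using ij addc_char[OF assms] by auto
      moreover have "Suc (i - 1) = i" using \<open>0 < i\<close> by simp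
      ultimately show "y \<in> remc D" using remc_char[OF assms] y by (auto simp: g_def)
    qed
  qed
  have z: "(0, rl D 0) \<in> addc D" using addc_char[OF assms] by simp
  have "card (remc D) = card (addc D - {(0, rl D 0)})" using bij bij_betw_same_card by blast
  also have "\<dots> = card (addc D) - 1" using card_Diff_singleton[OF z] .
  finally have e: "card (remc D) = card (addc D) - 1" .
  have "card (addc D) > 0" using z finite_addc[OF assms] card_gt_0_iff by blast
  thus ?thesis using e by simp
qed


lemma insert_remove_young: assumes "young L" "a \<in> addc L" shows "a \<in> remc (insert a L)"
  using assms unfolding addc_def remc_def by auto

lemma remove_insert_young: assumes "young L" "b \<in> remc L" shows "b \<in> addc (L - {b})"
proof -
  have "insert b (L - {b}) = L" using assms unfolding remc_def by auto
  thus ?thesis using assms unfolding addc_def remc_def by auto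
qed

lemma L1:
  assumes "young L" "a \<in> addc L" "b \<noteq> a"
  shows "b \<in> remc (insert a L) \<longleftrightarrow> b \<in> remc L \<and> a \<in> addc (L - {b})"
proof
  assume b: "b \<in> remc (insert a L)"
  have aL: "a \<notin> L" and yi: "young (insert a L)" using assms(2) by (auto simp: addc_def)
  have bL: "b \<in> L" using b assms(3) by (auto simp: remc_def)
  have yr: "young (insert a L - {b})" using b by (auto simp: remc_def)
  have "L - {b} = (insert a L - {b}) \<inter> L" using aL by auto
  hence "young (L - {b})" using young_Int[OF yr assms(1)] by simp
  moreover have "insert a (L - {b}) = insert a L - {b}" using assms(3) by auto
  ultimately show "b \<in> remc L \<and> a \<in> addc (L - {b})" using bL aL yr by (auto simp: remc_def addc_def)
next
  assume h: "b \<in> remc L \<and> a \<in> addc (L - {b})"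
  have "insert a (L - {b}) = insert a L - {b}" using assms(3) by auto
  thus "b \<in> remc (insert a L)" using h by (auto simp: remc_def addc_def)
qed

lemma L2:
  assumes "young L" "b \<in> remc L" "a \<noteq> b" "a \<in> addc (L - {b})"
  shows "a \<in> addc L"
proof -
  have bL: "b \<in> L" using assms(2) by (auto simp: remc_def)
  have "insert a L = L \<union> insert a (L - {b})" using bL by auto
  moreover have "young (insert a (L - {b}))" using assms(4) by (auto simp: addc_def)
  ultimately have "young (insert a L)" using young_Un[OF assms(1)] by metis
  moreover have "a \<notin> L" using assms(3,4) by (auto simp: addc_def)
  ultimately show ?thesis by (auto simp: addc_def)
qed

fun dd :: "nat \<Rightarrow> (nat \<times> nat) set \<Rightarrow> nat" where
  "dd 0 L = 1"
| "dd (Suc i) L = (\<Sum>b\<in>remc L. dd i (L - {b}))"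

lemma young_remc: "b \<in> remc L \<Longrightarrow> young (L - {b})" by (simp add: remc_def)

lemma young_addc: "a \<in> addc L \<Longrightarrow> young (insert a L)" by (simp add: addc_def)

lemma lemmaK:
  assumes "young L"
  shows "(\<Sum>a\<in>addc L. dd i (insert a L)) = dd (Suc i) L + dd i L + i * dd (i - 1) L"
  using assms
proof (induction i arbitrary: L)
  case 0
  then show ?case using card_addc[OF 0] by simp
next
  case (Suc i)
  note yL = Suc.prems
  define R where "R = (\<lambda>a b. a \<in> addc (L - {b}) \<and> a \<noteq> b)"
  define h where "h = (\<lambda>a b. dd i (insert a (L - {b})))"
  have inner: "(\<Sum>b\<in>remc (insert a L). dd i (insert a L - {b}))
      = dd i L + (\<Sum>b\<in>{b\<in>remc L. R a b}. h a b)" if a: "a \<in> addc L" for a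
  proof -
    have aL: "a \<notin> L" using a by (simp add: addc_def)
    have fin: "finite (remc (insert a L))" using finite_remc[OF young_addc[OF a]] .
    have "(\<Sum>b\<in>remc (insert a L). dd i (insert a L - {b}))
       = dd i (insert a L - {a}) + (\<Sum>b\<in>remc (insert a L) - {a}. dd i (insert a L - {b}))"
      using sum.remove[OF fin insert_remove_young[OF yL a], of "\<lambda>b. dd i (insert a L - {b})"] by simp
    moreover have "insert a L - {a} = L" using aL by auto
    moreover have "remc (insert a L) - {a} = {b\<in>remc L. R a b}"
      using L1[OF yL a] unfolding R_def by auto
    moreover have "(\<Sum>b\<in>{b\<in>remc L. R a b}. dd i (insert a L - {b})) = (\<Sum>b\<in>{b\<in>remc L. R a b}. h a b)"
      by (rule sum.cong) (auto simp: h_def R_def intro!: arg_cong[where f="dd i"])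
    ultimately show ?thesis by simp
  qed
  have inner2: "(\<Sum>a\<in>addc (L - {b}). h a b) = dd i L + (\<Sum>a | a \<in> addc L \<and> R a b. h a b)"
    if b: "b \<in> remc L" for b
  proof -
    have yb: "young (L - {b})" using young_remc[OF b] .
    have fin: "finite (addc (L - {b}))" using finite_addc[OF yb] .
    have "(\<Sum>a\<in>addc (L - {b}). h a b) = h b b + (\<Sum>a\<in>addc (L - {b}) - {b}. h a b)"
      using sum.remove[OF fin remove_insert_young[OF yL b], of "\<lambda>a. h a b"] by simp
    moreover have "insert b (L - {b}) = L" using b by (auto simp: remc_def)
    moreover have "addc (L - {b}) - {b} = {a. a \<in> addc L \<and> R a b}"
      using L2[OF yL b] unfolding R_def by auto
    ultimately show ?thesis by (simp add: h_def)
  qed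
  have LHS: "(\<Sum>a\<in>addc L. dd (Suc i) (insert a L))
     = card (addc L) * dd i L + (\<Sum>a\<in>addc L. \<Sum>b\<in>{b\<in>remc L. R a b}. h a b)"
    using inner by (simp add: sum.distrib)
  have swap: "(\<Sum>a\<in>addc L. \<Sum>b\<in>{b\<in>remc L. R a b}. h a b)
      = (\<Sum>b\<in>remc L. \<Sum>a | a \<in> addc L \<and> R a b. h a b)"
    by (rule sum.swap_restrict[OF finite_addc[OF yL] finite_remc[OF yL]])
  have IHb: "(\<Sum>a\<in>addc (L - {b}). h a b) = dd (Suc i) (L - {b}) + dd i (L - {b}) + i * dd (i - 1) (L - {b})"
    if b: "b \<in> remc L" for b
    using Suc.IH[OF young_remc[OF b]] by (simp add: h_def)
  have "(\<Sum>b\<in>remc L. \<Sum>a | a \<in> addc L \<and> R a b. h a b) + card (remc L) * dd i L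
      = (\<Sum>b\<in>remc L. dd i L + (\<Sum>a | a \<in> addc L \<and> R a b. h a b))"
    by (simp add: sum.distrib)
  also have "\<dots> = (\<Sum>b\<in>remc L. dd (Suc i) (L - {b}) + dd i (L - {b}) + i * dd (i - 1) (L - {b}))"
    by (rule sum.cong) (use inner2 IHb in auto)
  also have "\<dots> = dd (Suc (Suc i)) L + dd (Suc i) L + (\<Sum>b\<in>remc L. i * dd (i - 1) (L - {b}))"
    by (simp add: sum.distrib)
  also have "(\<Sum>b\<in>remc L. i * dd (i - 1) (L - {b})) = i * dd i L"
    by (cases i) (simp_all add: sum_distrib_left)
  finally have X: "(\<Sum>b\<in>remc L. \<Sum>a | a \<in> addc L \<and> R a b. h a b) + card (remc L) * dd i L
      = dd (Suc (Suc i)) L + dd (Suc i) L + i * dd i L" .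
  show ?case using LHS swap X card_addc[OF yL] by (simp add: algebra_simps)
qed


lemma finite_skew: "finite (\<nu> - \<mu>) \<Longrightarrow> finite {S. skew_syt \<nu> \<mu> S}"
proof -
  assume f: "finite (\<nu> - \<mu>)"
  have "{S. skew_syt \<nu> \<mu> S} \<subseteq> {S. \<forall>x. (x \<in> \<nu> - \<mu> \<longrightarrow> S x \<in> {1..card (\<nu> - \<mu>)}) \<and> (x \<notin> \<nu> - \<mu> \<longrightarrow> S x = 0)}"
    unfolding skew_syt_def bij_betw_def by auto
  thus ?thesis using finite_set_of_finite_funs[OF f, of "{1..card (\<nu> - \<mu>)}" 0] finite_subset by blast
qed

lemma skew_range: "skew_syt \<nu> \<mu> S \<Longrightarrow> c \<in> \<nu> - \<mu> \<Longrightarrow> S c \<in> {1..card (\<nu> - \<mu>)}"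
  unfolding skew_syt_def bij_betw_def by auto

lemma top_fwd:
  assumes yn: "young \<nu>" and ym: "young \<mu>" and cd: "card (\<nu> - \<mu>) = Suc m" and S: "skew_syt \<nu> \<mu> S"
  shows "\<exists>b\<in>remc \<nu> - \<mu>. skew_syt (\<nu> - {b}) \<mu> (S(b := 0)) \<and> S = (S(b := 0))(b := Suc m)"
proof -
  have bij: "bij_betw S (\<nu> - \<mu>) {1..Suc m}" and zero: "\<And>c. c \<notin> \<nu> - \<mu> \<Longrightarrow> S c = 0"
    and mono: "\<And>i j i' j'. (i, j) \<in> \<nu> - \<mu> \<Longrightarrow> (i', j') \<in> \<nu> - \<mu> \<Longrightarrow> i \<le> i' \<Longrightarrow> j \<le> j' \<Longrightarrow> S (i, j) \<le> S (i', j')"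
  proof -
    have D: "bij_betw S (\<nu> - \<mu>) {1..card (\<nu> - \<mu>)} \<and> (\<forall>c. c \<notin> \<nu> - \<mu> \<longrightarrow> S c = 0) \<and>
     (\<forall>i j i' j'. (i, j) \<in> \<nu> - \<mu> \<and> (i', j') \<in> \<nu> - \<mu> \<and> i \<le> i' \<and> j \<le> j'
        \<longrightarrow> S (i, j) \<le> S (i', j'))" using S unfolding skew_syt_def .
    show "bij_betw S (\<nu> - \<mu>) {1..Suc m}" using D cd by simp
    show "\<And>c. c \<notin> \<nu> - \<mu> \<Longrightarrow> S c = 0" using D by blast
    show "\<And>i j i' j'. (i, j) \<in> \<nu> - \<mu> \<Longrightarrow> (i', j') \<in> \<nu> - \<mu> \<Longrightarrow> i \<le> i' \<Longrightarrow> j \<le> j' \<Longrightarrow> S (i, j) \<le> S (i', j')"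
      using D by blast
  qed
  have "Suc m \<in> S ` (\<nu> - \<mu>)" using bij unfolding bij_betw_def by auto
  then obtain b where b: "b \<in> \<nu> - \<mu>" and Sb: "S b = Suc m" by auto
  have inj: "inj_on S (\<nu> - \<mu>)" using bij bij_betw_def by blast
  have rng: "\<And>c. c \<in> \<nu> - \<mu> \<Longrightarrow> S c \<in> {1..Suc m}" using bij unfolding bij_betw_def by auto
  have yb: "young (\<nu> - {b})"
    unfolding young_def
  proof (intro conjI allI impI)
    show "finite (\<nu> - {b})" using young_finite[OF yn] by simp
  next
    fix i j i' j' assume H: "(i, j) \<in> \<nu> - {b} \<and> i' \<le> i \<and> j' \<le> j"
    have in1: "(i', j') \<in> \<nu>" using H young_closed[OF yn] by blast
    have "(i', j') \<noteq> b"
    proof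
      assume eq: "(i', j') = b"
      show False
      proof (cases "(i, j) \<in> \<mu>")
        case True
        hence "(i', j') \<in> \<mu>" using H young_closed[OF ym] by blast
        thus False using eq b by simp
      next
        case False
        hence c: "(i, j) \<in> \<nu> - \<mu>" using H by simp
        have c': "(i', j') \<in> \<nu> - \<mu>" using b eq by simp
        have "S (i', j') \<le> S (i, j)" using mono[OF c' c] H by blast
        moreover have "S (i, j) \<le> Suc m" using rng[OF c] by simp
        ultimately have "S (i, j) = S b" using Sb eq by simp
        hence "(i, j) = b" using inj c b by (meson inj_onD)
        thus False using H by simp
      qed
    qed
    thus "(i', j') \<in> \<nu> - {b}" using in1 by simp
  qed
  have bR: "b \<in> remc \<nu> - \<mu>" using b yb by (simp add: remc_def)
  have eqs: "\<nu> - {b} - \<mu> = (\<nu> - \<mu>) - {b}" by auto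
  have cd2: "card (\<nu> - {b} - \<mu>) = m" using eqs cd b by simp
  have "bij_betw S ((\<nu> - \<mu>) - {b}) ({1..Suc m} - {Suc m})"
    by (rule bij_betw_DiffI[OF bij]) (use b Sb in auto)
  moreover have "{1..Suc m} - {Suc m} = {1..m}" by auto
  ultimately have "bij_betw S (\<nu> - {b} - \<mu>) {1..m}" using eqs by simp
  moreover have "bij_betw (S(b := 0)) (\<nu> - {b} - \<mu>) {1..m} = bij_betw S (\<nu> - {b} - \<mu>) {1..m}"
    by (rule bij_betw_cong) auto
  ultimately have "bij_betw (S(b := 0)) (\<nu> - {b} - \<mu>) {1..m}" by simp
  moreover have "\<forall>c. c \<notin> \<nu> - {b} - \<mu> \<longrightarrow> (S(b := 0)) c = 0" using zero by auto
  moreover have "\<forall>i j i' j'. (i, j) \<in> \<nu> - {b} - \<mu> \<and> (i', j') \<in> \<nu> - {b} - \<mu> \<and> i \<le> i' \<and> j \<le> j'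
        \<longrightarrow> (S(b := 0)) (i, j) \<le> (S(b := 0)) (i', j')" using mono by auto
  ultimately have "skew_syt (\<nu> - {b}) \<mu> (S(b := 0))" unfolding skew_syt_def using cd2 by simp
  moreover have "S = (S(b := 0))(b := Suc m)" using Sb by auto
  ultimately show ?thesis using bR by blast
qed

lemma top_bwd:
  assumes yn: "young \<nu>" and cd: "card (\<nu> - \<mu>) = Suc m" and b: "b \<in> remc \<nu> - \<mu>"
    and S: "skew_syt (\<nu> - {b}) \<mu> S"
  shows "skew_syt \<nu> \<mu> (S(b := Suc m))"
proof -
  have bn: "b \<in> \<nu>" "b \<notin> \<mu>" and yb: "young (\<nu> - {b})" using b by (auto simp: remc_def)
  have eqs: "\<nu> - \<mu> = (\<nu> - {b} - \<mu>) \<union> {b}" using bn by auto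
  have "\<nu> - {b} - \<mu> = (\<nu> - \<mu>) - {b}" by auto
  hence cd2: "card (\<nu> - {b} - \<mu>) = m" using cd bn card_Diff_singleton[of b "\<nu> - \<mu>"] by simp
  have bij: "bij_betw S (\<nu> - {b} - \<mu>) {1..m}" and zero: "\<And>c. c \<notin> \<nu> - {b} - \<mu> \<Longrightarrow> S c = 0"
    and mono: "\<And>i j i' j'. (i, j) \<in> \<nu> - {b} - \<mu> \<Longrightarrow> (i', j') \<in> \<nu> - {b} - \<mu> \<Longrightarrow> i \<le> i' \<Longrightarrow> j \<le> j' \<Longrightarrow> S (i, j) \<le> S (i', j')"
  proof -
    have D: "bij_betw S (\<nu> - {b} - \<mu>) {1..card (\<nu> - {b} - \<mu>)} \<and> (\<forall>c. c \<notin> \<nu> - {b} - \<mu> \<longrightarrow> S c = 0) \<and>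
     (\<forall>i j i' j'. (i, j) \<in> \<nu> - {b} - \<mu> \<and> (i', j') \<in> \<nu> - {b} - \<mu> \<and> i \<le> i' \<and> j \<le> j'
        \<longrightarrow> S (i, j) \<le> S (i', j'))" using S unfolding skew_syt_def .
    then obtain D1 D2 D3 where D1: "bij_betw S (\<nu> - {b} - \<mu>) {1..card (\<nu> - {b} - \<mu>)}"
      and D2: "\<forall>c. c \<notin> \<nu> - {b} - \<mu> \<longrightarrow> S c = 0" and D3: "\<forall>i j i' j'. (i, j) \<in> \<nu> - {b} - \<mu> \<and> (i', j') \<in> \<nu> - {b} - \<mu> \<and> i \<le> i' \<and> j \<le> j'
        \<longrightarrow> S (i, j) \<le> S (i', j')" by (elim conjE)
    show "bij_betw S (\<nu> - {b} - \<mu>) {1..m}" using D1 unfolding cd2 .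
    show "\<And>c. c \<notin> \<nu> - {b} - \<mu> \<Longrightarrow> S c = 0" by (rule D2[rule_format])
    show "\<And>i j i' j'. (i, j) \<in> \<nu> - {b} - \<mu> \<Longrightarrow> (i', j') \<in> \<nu> - {b} - \<mu> \<Longrightarrow> i \<le> i' \<Longrightarrow> j \<le> j' \<Longrightarrow> S (i, j) \<le> S (i', j')"
    proof -
      fix i j i' j' assume a: "(i, j) \<in> \<nu> - {b} - \<mu>" "(i', j') \<in> \<nu> - {b} - \<mu>" "i \<le> i'" "j \<le> j'"
      show "S (i, j) \<le> S (i', j')" using D3[rule_format, OF conjI[OF a(1) conjI[OF a(2) conjI[OF a(3) a(4)]]]] .
    qed
  qed
  have rng: "\<And>c. c \<in> \<nu> - {b} - \<mu> \<Longrightarrow> S c \<in> {1..m}" using bij unfolding bij_betw_def by auto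
  have "bij_betw (S(b := Suc m)) (\<nu> - {b} - \<mu>) {1..m} = bij_betw S (\<nu> - {b} - \<mu>) {1..m}"
    by (rule bij_betw_cong) auto
  hence bij1: "bij_betw (S(b := Suc m)) (\<nu> - {b} - \<mu>) {1..m}" using bij by simp
  have "bij_betw (S(b := Suc m)) ((\<nu> - {b} - \<mu>) \<union> {b}) ({1..m} \<union> {(S(b := Suc m)) b})"
    by (rule notIn_Un_bij_betw[OF _ _ bij1]) auto
  moreover have "{1..m} \<union> {(S(b := Suc m)) b} = {1..Suc m}" by auto
  ultimately have BB: "bij_betw (S(b := Suc m)) ((\<nu> - {b} - \<mu>) \<union> {b}) {1..Suc m}" by simp
  have B: "bij_betw (S(b := Suc m)) (\<nu> - \<mu>) {1..card (\<nu> - \<mu>)}" unfolding cd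
    by (subst eqs) (rule BB)
  have Z: "\<forall>c. c \<notin> \<nu> - \<mu> \<longrightarrow> (S(b := Suc m)) c = 0" using zero bn by auto
  have M: "(S(b := Suc m)) (i, j) \<le> (S(b := Suc m)) (i', j')"
    if H: "(i, j) \<in> \<nu> - \<mu>" "(i', j') \<in> \<nu> - \<mu>" "i \<le> i'" "j \<le> j'" for i j i' j'
  proof (cases "(i, j) = b")
    case True
    show ?thesis
    proof (cases "(i', j') = b")
      case True thus ?thesis using \<open>(i, j) = b\<close> by simp
    next
      case False
      hence i'n: "(i', j') \<in> \<nu> - {b}" using H by simp
      have "(i, j) \<in> \<nu> - {b}" using young_closed[OF yb i'n H(3) H(4)] .
      thus ?thesis using True by simp
    qed
  next
    case False
    show ?thesis
    proof (cases "(i', j') = b")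
      case True thus ?thesis using False rng[of "(i, j)"] H by auto
    next
      case F2: False
      thus ?thesis using False H mono[of i j i' j'] by auto
    qed
  qed
  have M': "\<forall>i j i' j'. (i, j) \<in> \<nu> - \<mu> \<and> (i', j') \<in> \<nu> - \<mu> \<and> i \<le> i' \<and> j \<le> j'
        \<longrightarrow> (S(b := Suc m)) (i, j) \<le> (S(b := Suc m)) (i', j')" using M by blast
  show ?thesis unfolding skew_syt_def using B Z M' by (intro conjI)
qed

lemma top_decomp:
  assumes yn: "young \<nu>" and ym: "young \<mu>" and cd: "card (\<nu> - \<mu>) = Suc m"
  shows "{S. skew_syt \<nu> \<mu> S} = (\<Union>b\<in>remc \<nu> - \<mu>. (\<lambda>S'. S'(b := Suc m)) ` {S'. skew_syt (\<nu> - {b}) \<mu> S'})"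
proof
  show "{S. skew_syt \<nu> \<mu> S} \<subseteq> (\<Union>b\<in>remc \<nu> - \<mu>. (\<lambda>S'. S'(b := Suc m)) ` {S'. skew_syt (\<nu> - {b}) \<mu> S'})"
  proof
    fix S assume "S \<in> {S. skew_syt \<nu> \<mu> S}"
    hence S: "skew_syt \<nu> \<mu> S" by simp
    obtain b where b: "b \<in> remc \<nu> - \<mu>" and sk: "skew_syt (\<nu> - {b}) \<mu> (S(b := 0))"
      and eq: "S = (S(b := 0))(b := Suc m)"
      using top_fwd[OF yn ym cd S] by blast
    have "S \<in> (\<lambda>S'. S'(b := Suc m)) ` {S'. skew_syt (\<nu> - {b}) \<mu> S'}"
      by (rule image_eqI[where f = "\<lambda>S'. S'(b := Suc m)" and x = "S(b := 0)", OF eq]) (simp add: sk)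
    thus "S \<in> (\<Union>b\<in>remc \<nu> - \<mu>. (\<lambda>S'. S'(b := Suc m)) ` {S'. skew_syt (\<nu> - {b}) \<mu> S'})" using b by blast
  qed
next
  show "(\<Union>b\<in>remc \<nu> - \<mu>. (\<lambda>S'. S'(b := Suc m)) ` {S'. skew_syt (\<nu> - {b}) \<mu> S'}) \<subseteq> {S. skew_syt \<nu> \<mu> S}"
    using top_bwd[OF yn cd] by auto
qed

lemma card_UN_upd:
  assumes fB: "finite B" and fF: "\<And>b. b \<in> B \<Longrightarrow> finite (F b)"
    and z: "\<And>b S. b \<in> B \<Longrightarrow> S \<in> F b \<Longrightarrow> S b = 0"
    and d: "\<And>b b' S. b \<in> B \<Longrightarrow> b' \<in> B \<Longrightarrow> b \<noteq> b' \<Longrightarrow> S \<in> F b' \<Longrightarrow> S b \<noteq> v"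
    and v: "v \<noteq> 0"
  shows "card (\<Union>b\<in>B. (\<lambda>S. S(b := v)) ` F b) = (\<Sum>b\<in>B. card (F b))"
proof -
  have "card (\<Union>b\<in>B. (\<lambda>S. S(b := v)) ` F b) = (\<Sum>b\<in>B. card ((\<lambda>S. S(b := v)) ` F b))"
  proof (rule card_UN_disjoint[OF fB])
    show "\<forall>b\<in>B. finite ((\<lambda>S. S(b := v)) ` F b)" using fF by auto
    show "\<forall>i\<in>B. \<forall>j\<in>B. i \<noteq> j \<longrightarrow> (\<lambda>S. S(i := v)) ` F i \<inter> (\<lambda>S. S(j := v)) ` F j = {}"
    proof (intro ballI impI)
      fix i j assume ij: "i \<in> B" "j \<in> B" "i \<noteq> j"
      show "(\<lambda>S. S(i := v)) ` F i \<inter> (\<lambda>S. S(j := v)) ` F j = {}"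
      proof (rule ccontr)
        assume "\<not> ?thesis"
        then obtain S S' where S: "S \<in> F i" "S' \<in> F j" and e: "S(i := v) = S'(j := v)" by blast
        have "(S(i := v)) i = (S'(j := v)) i" using e by simp
        hence "S' i = v" using ij by simp
        thus False using d[OF ij(1,2,3) S(2)] by simp
      qed
    qed
  qed
  also have "\<dots> = (\<Sum>b\<in>B. card (F b))"
  proof (rule sum.cong[OF refl])
    fix b assume b: "b \<in> B"
    have "inj_on (\<lambda>S. S(b := v)) (F b)"
    proof (rule inj_onI)
      fix S S' assume S: "S \<in> F b" "S' \<in> F b" and e: "S(b := v) = S'(b := v)"
      show "S = S'"
      proof
        fix x show "S x = S' x"
          using z[OF b S(1)] z[OF b S(2)] fun_cong[OF e, of x] by (cases "x = b") auto
      qed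
    qed
    thus "card ((\<lambda>S. S(b := v)) ` F b) = card (F b)" by (rule card_image)
  qed
  finally show ?thesis .
qed

lemma skew_f_top:
  assumes yn: "young \<nu>" and ym: "young \<mu>" and lt: "card \<mu> < card \<nu>"
  shows "skew_f \<nu> \<mu> = (\<Sum>b\<in>remc \<nu>. skew_f (\<nu> - {b}) \<mu>)"
proof (cases "\<mu> \<subseteq> \<nu>")
  case False
  hence "\<And>b. \<not> \<mu> \<subseteq> \<nu> - {b}" by auto
  thus ?thesis using False by (simp add: skew_f_def)
next
  case True
  have fn: "finite \<nu>" using young_finite[OF yn] .
  have "card (\<nu> - \<mu>) = card \<nu> - card \<mu>" using card_Diff_subset[OF finite_subset[OF True fn] True] .
  hence "card (\<nu> - \<mu>) \<noteq> 0" using lt by simp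
  then obtain m where cd: "card (\<nu> - \<mu>) = Suc m" using not0_implies_Suc by blast
  have "skew_f \<nu> \<mu> = card {S. skew_syt \<nu> \<mu> S}" using True by (simp add: skew_f_def)
  also have "\<dots> = card (\<Union>b\<in>remc \<nu> - \<mu>. (\<lambda>S'. S'(b := Suc m)) ` {S'. skew_syt (\<nu> - {b}) \<mu> S'})"
    using top_decomp[OF yn ym cd] by simp
  also have "\<dots> = (\<Sum>b\<in>remc \<nu> - \<mu>. card {S'. skew_syt (\<nu> - {b}) \<mu> S'})"
  proof (rule card_UN_upd)
    show "finite (remc \<nu> - \<mu>)" using finite_remc[OF yn] by simp
    show "\<And>b. b \<in> remc \<nu> - \<mu> \<Longrightarrow> finite {S'. skew_syt (\<nu> - {b}) \<mu> S'}"
      using fn by (intro finite_skew) simp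
    show "\<And>b S. b \<in> remc \<nu> - \<mu> \<Longrightarrow> S \<in> {S'. skew_syt (\<nu> - {b}) \<mu> S'} \<Longrightarrow> S b = 0"
      unfolding skew_syt_def by blast
    show "\<And>b b' S. b \<in> remc \<nu> - \<mu> \<Longrightarrow> b' \<in> remc \<nu> - \<mu> \<Longrightarrow> b \<noteq> b' \<Longrightarrow>
          S \<in> {S'. skew_syt (\<nu> - {b'}) \<mu> S'} \<Longrightarrow> S b \<noteq> Suc m"
    proof -
      fix b b' S assume b: "b \<in> remc \<nu> - \<mu>" "b' \<in> remc \<nu> - \<mu>" "b \<noteq> b'" "S \<in> {S'. skew_syt (\<nu> - {b'}) \<mu> S'}"
      have c: "b \<in> \<nu> - {b'} - \<mu>" using b by (auto simp: remc_def)
      have b'n: "b' \<in> \<nu> - \<mu>" using b(2) by (auto simp: remc_def)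
      have "\<nu> - {b'} - \<mu> = (\<nu> - \<mu>) - {b'}" by auto
      hence "card (\<nu> - {b'} - \<mu>) = m" using cd b'n card_Diff_singleton[of b' "\<nu> - \<mu>"] by simp
      thus "S b \<noteq> Suc m" using skew_range[OF _ c, of S] b(4) by auto
    qed
  qed simp
  also have "\<dots> = (\<Sum>b\<in>remc \<nu> - \<mu>. skew_f (\<nu> - {b}) \<mu>)"
    by (rule sum.cong) (use True in \<open>auto simp: skew_f_def remc_def\<close>)
  also have "\<dots> = (\<Sum>b\<in>remc \<nu>. skew_f (\<nu> - {b}) \<mu>)"
    by (rule sum.mono_neutral_left) (auto simp: finite_remc[OF yn] skew_f_def)
  finally show ?thesis .
qed

lemma skew_f_same:
  assumes yn: "young \<nu>" and ym: "young \<mu>" and e: "card \<mu> = card \<nu>"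
  shows "skew_f \<nu> \<mu> = (if \<nu> = \<mu> then 1 else 0)"
proof (cases "\<nu> = \<mu>")
  case True
  have "{S. skew_syt \<mu> \<mu> S} = {\<lambda>_. 0}"
    unfolding skew_syt_def by (auto simp: bij_betw_def)
  thus ?thesis using True by (simp add: skew_f_def)
next
  case False
  have "\<not> \<mu> \<subseteq> \<nu>" using False e young_finite[OF yn] card_subset_eq by blast
  thus ?thesis using False by (simp add: skew_f_def)
qed


lemma sum_indicator: "finite B \<Longrightarrow> (\<Sum>b\<in>B. if P b then 1 else (0::nat)) = card {b\<in>B. P b}"
proof -
  assume "finite B"
  hence "(\<Sum>b\<in>B. if P b then 1 else (0::nat)) = card (B \<inter> {b. P b})" by (simp add: sum.If_cases)
  moreover have "B \<inter> {b. P b} = {b\<in>B. P b}" by auto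
  ultimately show ?thesis by simp
qed

lemma card_remove_remc: "young \<nu> \<Longrightarrow> b \<in> remc \<nu> \<Longrightarrow> card (\<nu> - {b}) = card \<nu> - 1"
  using young_finite by (auto simp: remc_def)

lemma card_insert_addc: "young \<mu> \<Longrightarrow> a \<in> addc \<mu> \<Longrightarrow> card (insert a \<mu>) = Suc (card \<mu>)"
  using young_finite by (auto simp: addc_def)

lemma skew_f_bot_gen:
  "\<forall>\<nu> \<mu>. young \<nu> \<longrightarrow> young \<mu> \<longrightarrow> card \<nu> = card \<mu> + Suc d \<longrightarrow>
     skew_f \<nu> \<mu> = (\<Sum>a\<in>addc \<mu>. skew_f \<nu> (insert a \<mu>))"
proof (induction d)
  case 0
  show ?case
  proof (intro allI impI)
    fix \<nu> \<mu> :: "(nat \<times> nat) set"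
    assume yn: "young \<nu>" and ym: "young \<mu>" and cd: "card \<nu> = card \<mu> + Suc 0"
    have "skew_f \<nu> \<mu> = (\<Sum>b\<in>remc \<nu>. skew_f (\<nu> - {b}) \<mu>)"
      using skew_f_top[OF yn ym] cd by simp
    also have "\<dots> = (\<Sum>b\<in>remc \<nu>. if \<nu> - {b} = \<mu> then 1 else 0)"
    proof (rule sum.cong[OF refl])
      fix b assume b: "b \<in> remc \<nu>"
      have "card \<mu> = card (\<nu> - {b})" using card_remove_remc[OF yn b] cd by simp
      thus "skew_f (\<nu> - {b}) \<mu> = (if \<nu> - {b} = \<mu> then 1 else 0)"
        by (rule skew_f_same[OF young_remc[OF b] ym])
    qed
    also have "\<dots> = card {b\<in>remc \<nu>. \<nu> - {b} = \<mu>}" by (rule sum_indicator[OF finite_remc[OF yn]])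
    finally have L: "skew_f \<nu> \<mu> = card {b\<in>remc \<nu>. \<nu> - {b} = \<mu>}" .
    have "(\<Sum>a\<in>addc \<mu>. skew_f \<nu> (insert a \<mu>)) = (\<Sum>a\<in>addc \<mu>. if \<nu> = insert a \<mu> then 1 else 0)"
    proof (rule sum.cong[OF refl])
      fix a assume a: "a \<in> addc \<mu>"
      have "card (insert a \<mu>) = card \<nu>" using card_insert_addc[OF ym a] cd by simp
      thus "skew_f \<nu> (insert a \<mu>) = (if \<nu> = insert a \<mu> then 1 else 0)"
        by (rule skew_f_same[OF yn young_addc[OF a]])
    qed
    also have "\<dots> = card {a\<in>addc \<mu>. \<nu> = insert a \<mu>}" by (rule sum_indicator[OF finite_addc[OF ym]])
    finally have R: "(\<Sum>a\<in>addc \<mu>. skew_f \<nu> (insert a \<mu>)) = card {a\<in>addc \<mu>. \<nu> = insert a \<mu>}" .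
    show "skew_f \<nu> \<mu> = (\<Sum>a\<in>addc \<mu>. skew_f \<nu> (insert a \<mu>))"
    proof (cases "\<mu> \<subseteq> \<nu>")
      case True
      have fn: "finite \<nu>" using young_finite[OF yn] .
      have "card (\<nu> - \<mu>) = Suc 0" using card_Diff_subset[OF finite_subset[OF True fn] True] cd by simp
      then obtain c where c: "\<nu> - \<mu> = {c}" by (meson card_1_singleton_iff)
      have "c \<in> \<nu> - \<mu>" by (simp add: c)
      hence cn: "c \<in> \<nu>" "c \<notin> \<mu>" by simp_all
      have "\<nu> - (\<nu> - \<mu>) = \<mu>" by (rule double_diff[OF True subset_refl])
      hence e1: "\<nu> - {c} = \<mu>" using c by simp
      have "\<mu> \<union> (\<nu> - \<mu>) = \<nu>" using True by auto
      hence e2: "insert c \<mu> = \<nu>" using c by simp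
      have "{b\<in>remc \<nu>. \<nu> - {b} = \<mu>} = {c}"
      proof
        have "c \<in> remc \<nu>" unfolding remc_def using e1 cn ym by simp
        thus "{c} \<subseteq> {b\<in>remc \<nu>. \<nu> - {b} = \<mu>}" using e1 by simp
        show "{b\<in>remc \<nu>. \<nu> - {b} = \<mu>} \<subseteq> {c}"
        proof
          fix b assume "b \<in> {b\<in>remc \<nu>. \<nu> - {b} = \<mu>}"
          hence bn: "b \<in> \<nu>" and eb: "\<nu> - {b} = \<mu>" unfolding remc_def by auto
          have "b \<notin> \<mu>"
          proof
            assume "b \<in> \<mu>"
            hence "b \<in> \<nu> - {b}" using eb by simp
            thus False by simp
          qed
          hence "b \<in> \<nu> - \<mu>" using bn by simp
          thus "b \<in> {c}" using c by simp
        qed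
      qed
      moreover have "{a\<in>addc \<mu>. \<nu> = insert a \<mu>} = {c}"
      proof
        have "c \<in> addc \<mu>" unfolding addc_def using e2 cn yn by simp
        thus "{c} \<subseteq> {a\<in>addc \<mu>. \<nu> = insert a \<mu>}" using e2 by simp
        show "{a\<in>addc \<mu>. \<nu> = insert a \<mu>} \<subseteq> {c}"
        proof
          fix a assume "a \<in> {a\<in>addc \<mu>. \<nu> = insert a \<mu>}"
          hence "a \<notin> \<mu>" "\<nu> = insert a \<mu>" unfolding addc_def by auto
          hence "a \<in> \<nu> - \<mu>" by simp
          thus "a \<in> {c}" using c by simp
        qed
      qed
      ultimately show ?thesis unfolding L R by simp
    next
      case False
      have e1: "{b\<in>remc \<nu>. \<nu> - {b} = \<mu>} = {}"
      proof (rule ccontr)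
        assume "\<not> ?thesis"
        then obtain b where "\<nu> - {b} = \<mu>" by auto
        hence "\<mu> \<subseteq> \<nu>" by auto
        thus False using False by simp
      qed
      have e2: "{a\<in>addc \<mu>. \<nu> = insert a \<mu>} = {}"
      proof (rule ccontr)
        assume "\<not> ?thesis"
        then obtain a where "\<nu> = insert a \<mu>" by auto
        hence "\<mu> \<subseteq> \<nu>" by auto
        thus False using False by simp
      qed
      show ?thesis unfolding L R e1 e2 by simp
    qed
  qed
next
  case (Suc d)
  show ?case
  proof (intro allI impI)
    fix \<nu> \<mu> :: "(nat \<times> nat) set"
    assume yn: "young \<nu>" and ym: "young \<mu>" and cd: "card \<nu> = card \<mu> + Suc (Suc d)"
    have "skew_f \<nu> \<mu> = (\<Sum>b\<in>remc \<nu>. skew_f (\<nu> - {b}) \<mu>)"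
      using skew_f_top[OF yn ym] cd by simp
    also have "\<dots> = (\<Sum>b\<in>remc \<nu>. \<Sum>a\<in>addc \<mu>. skew_f (\<nu> - {b}) (insert a \<mu>))"
    proof (rule sum.cong[OF refl])
      fix b assume b: "b \<in> remc \<nu>"
      have "card (\<nu> - {b}) = card \<mu> + Suc d" using card_remove_remc[OF yn b] cd by simp
      thus "skew_f (\<nu> - {b}) \<mu> = (\<Sum>a\<in>addc \<mu>. skew_f (\<nu> - {b}) (insert a \<mu>))"
        using Suc.IH young_remc[OF b] ym by blast
    qed
    also have "\<dots> = (\<Sum>a\<in>addc \<mu>. \<Sum>b\<in>remc \<nu>. skew_f (\<nu> - {b}) (insert a \<mu>))"
      by (rule sum.swap)
    also have "\<dots> = (\<Sum>a\<in>addc \<mu>. skew_f \<nu> (insert a \<mu>))"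
    proof (rule sum.cong[OF refl])
      fix a assume a: "a \<in> addc \<mu>"
      have "card (insert a \<mu>) < card \<nu>" using card_insert_addc[OF ym a] cd by simp
      thus "(\<Sum>b\<in>remc \<nu>. skew_f (\<nu> - {b}) (insert a \<mu>)) = skew_f \<nu> (insert a \<mu>)"
        using skew_f_top[OF yn young_addc[OF a]] by simp
    qed
    finally show "skew_f \<nu> \<mu> = (\<Sum>a\<in>addc \<mu>. skew_f \<nu> (insert a \<mu>))" .
  qed
qed

lemma skew_f_bot:
  assumes "young \<nu>" "young \<mu>" "card \<mu> < card \<nu>"
  shows "skew_f \<nu> \<mu> = (\<Sum>a\<in>addc \<mu>. skew_f \<nu> (insert a \<mu>))"
proof -
  obtain d where "card \<nu> = card \<mu> + Suc d" using assms(3) less_iff_Suc_add by auto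
  thus ?thesis using skew_f_bot_gen assms by blast
qed

lemma dd_zero: "young L \<Longrightarrow> card L < i \<Longrightarrow> dd i L = 0"
proof (induction i arbitrary: L)
  case 0 thus ?case by simp
next
  case (Suc i)
  have "\<And>b. b \<in> remc L \<Longrightarrow> dd i (L - {b}) = 0"
  proof -
    fix b assume b: "b \<in> remc L"
    have "card L > 0" using b young_finite[OF Suc.prems(1)] by (auto simp: remc_def card_gt_0_iff)
    hence "card (L - {b}) < i" using card_remove_remc[OF Suc.prems(1) b] Suc.prems(2) by simp
    thus "dd i (L - {b}) = 0" using Suc.IH young_remc[OF b] by blast
  qed
  thus ?case by simp
qed

lemma dd_skew:
  "young L \<Longrightarrow> i \<le> card L \<Longrightarrow> (\<Sum>\<mu>\<in>Y (card L - i). skew_f L \<mu>) = dd i L"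
proof (induction i arbitrary: L)
  case 0
  have "(\<Sum>\<mu>\<in>Y (card L). skew_f L \<mu>) = (\<Sum>\<mu>\<in>Y (card L). if L = \<mu> then 1 else 0)"
    by (rule sum.cong[OF refl]) (use skew_f_same 0 in \<open>auto simp: Y_def\<close>)
  also have "\<dots> = 1" using 0 finite_Y by (simp add: Y_def)
  finally show ?case by simp
next
  case (Suc i)
  note yL = Suc.prems(1)
  have "(\<Sum>\<mu>\<in>Y (card L - Suc i). skew_f L \<mu>) = (\<Sum>\<mu>\<in>Y (card L - Suc i). \<Sum>b\<in>remc L. skew_f (L - {b}) \<mu>)"
    by (rule sum.cong[OF refl]) (use skew_f_top[OF yL] Suc.prems in \<open>auto simp: Y_def\<close>)
  also have "\<dots> = (\<Sum>b\<in>remc L. \<Sum>\<mu>\<in>Y (card L - Suc i). skew_f (L - {b}) \<mu>)" by (rule sum.swap)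
  also have "\<dots> = (\<Sum>b\<in>remc L. dd i (L - {b}))"
  proof (rule sum.cong[OF refl])
    fix b assume b: "b \<in> remc L"
    have c: "card (L - {b}) = card L - 1" using card_remove_remc[OF yL b] .
    hence "card (L - {b}) - i = card L - Suc i" "i \<le> card (L - {b})" using Suc.prems by auto
    thus "(\<Sum>\<mu>\<in>Y (card L - Suc i). skew_f (L - {b}) \<mu>) = dd i (L - {b})"
      using Suc.IH[OF young_remc[OF b]] by simp
  qed
  finally show ?case by simp
qed

definition AA :: "nat \<Rightarrow> (nat \<times> nat) set \<Rightarrow> nat" where
  "AA m L = (\<Sum>\<nu>\<in>Y (card L + m). skew_f \<nu> L)"

lemma AA_0: "young L \<Longrightarrow> AA 0 L = 1"
proof -
  assume yL: "young L"
  have "AA 0 L = (\<Sum>\<nu>\<in>Y (card L). if \<nu> = L then 1 else 0)"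
    unfolding AA_def add_0_right by (rule sum.cong[OF refl]) (use skew_f_same yL in \<open>auto simp: Y_def\<close>)
  also have "\<dots> = 1" using yL finite_Y by (simp add: Y_def)
  finally show ?thesis .
qed

lemma AA_Suc: "young L \<Longrightarrow> AA (Suc m) L = (\<Sum>a\<in>addc L. AA m (insert a L))"
proof -
  assume yL: "young L"
  have "AA (Suc m) L = (\<Sum>\<nu>\<in>Y (card L + Suc m). \<Sum>a\<in>addc L. skew_f \<nu> (insert a L))"
    unfolding AA_def by (rule sum.cong[OF refl]) (use skew_f_bot yL in \<open>auto simp: Y_def\<close>)
  also have "\<dots> = (\<Sum>a\<in>addc L. \<Sum>\<nu>\<in>Y (card L + Suc m). skew_f \<nu> (insert a L))" by (rule sum.swap)
  also have "\<dots> = (\<Sum>a\<in>addc L. AA m (insert a L))"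
    unfolding AA_def by (rule sum.cong[OF refl]) (use card_insert_addc[OF yL] in simp)
  finally show ?thesis .
qed


definition Inv :: "nat set \<Rightarrow> (nat \<Rightarrow> nat) set" where
  "Inv S = {p. p permutes S \<and> p \<circ> p = id}"

lemma Inv_char: "p \<in> Inv S \<longleftrightarrow> (\<forall>x. x \<notin> S \<longrightarrow> p x = x) \<and> (\<forall>x. p (p x) = x)"
proof
  assume "p \<in> Inv S"
  hence pp: "p permutes S" "p \<circ> p = id" by (auto simp: Inv_def)
  have "\<forall>x. x \<notin> S \<longrightarrow> p x = x" using pp(1) by (simp add: permutes_def)
  moreover have "\<forall>x. p (p x) = x" using pp(2) by (metis comp_apply id_apply)
  ultimately show "(\<forall>x. x \<notin> S \<longrightarrow> p x = x) \<and> (\<forall>x. p (p x) = x)" by blast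
next
  assume h: "(\<forall>x. x \<notin> S \<longrightarrow> p x = x) \<and> (\<forall>x. p (p x) = x)"
  have "\<forall>y. \<exists>!x. p x = y"
  proof
    fix y show "\<exists>!x. p x = y"
    proof (rule ex1I[where a = "p y"])
      show "p (p y) = y" using h by blast
      fix x assume "p x = y"
      thus "x = p y" using h by metis
    qed
  qed
  hence "p permutes S" using h by (simp add: permutes_def)
  moreover have "p \<circ> p = id" using h by (simp add: fun_eq_iff)
  ultimately show "p \<in> Inv S" by (simp add: Inv_def)
qed

lemma finite_Inv: "finite S \<Longrightarrow> finite (Inv S)"
proof -
  assume "finite S"
  hence "finite {p. p permutes S}" by (rule finite_permutations)
  thus ?thesis by (rule finite_subset[rotated]) (auto simp: Inv_def)
qed

fun tt :: "nat \<Rightarrow> nat" where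
  "tt 0 = 1"
| "tt (Suc n) = tt n + n * tt (n - 1)"

lemma Inv_fix: assumes "x \<in> S" shows "{p \<in> Inv S. p x = x} = Inv (S - {x})"
proof
  show "{p \<in> Inv S. p x = x} \<subseteq> Inv (S - {x})"
  proof
    fix p assume "p \<in> {p \<in> Inv S. p x = x}"
    hence a: "\<forall>z. z \<notin> S \<longrightarrow> p z = z" "\<forall>z. p (p z) = z" "p x = x" using Inv_char by auto
    have "\<forall>z. z \<notin> S - {x} \<longrightarrow> p z = z"
    proof (intro allI impI)
      fix z assume "z \<notin> S - {x}"
      thus "p z = z" using a by (cases "z = x") auto
    qed
    thus "p \<in> Inv (S - {x})" using a Inv_char by blast
  qed
next
  show "Inv (S - {x}) \<subseteq> {p \<in> Inv S. p x = x}"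
  proof
    fix p assume "p \<in> Inv (S - {x})"
    hence a: "\<forall>z. z \<notin> S - {x} \<longrightarrow> p z = z" "\<forall>z. p (p z) = z" using Inv_char by auto
    hence "p x = x" by simp
    moreover have "\<forall>z. z \<notin> S \<longrightarrow> p z = z" using a by simp
    ultimately show "p \<in> {p \<in> Inv S. p x = x}" using a Inv_char by blast
  qed
qed

lemma Inv_swap:
  assumes xS: "x \<in> S" and yS: "y \<in> S" and xy: "x \<noteq> y"
  shows "{p \<in> Inv S. p x = y} = (\<lambda>g. transpose x y \<circ> g) ` Inv (S - {x, y})"
proof
  show "{p \<in> Inv S. p x = y} \<subseteq> (\<lambda>g. transpose x y \<circ> g) ` Inv (S - {x, y})"
  proof
    fix p assume "p \<in> {p \<in> Inv S. p x = y}"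
    hence a: "\<forall>z. z \<notin> S \<longrightarrow> p z = z" "\<forall>z. p (p z) = z" "p x = y" using Inv_char by auto
    have py: "p y = x" using a by metis
    define g where "g = transpose x y \<circ> p"
    have pg: "p = transpose x y \<circ> g" unfolding g_def by (simp add: fun_eq_iff)
    have g1: "g z = z" if "z \<notin> S - {x, y}" for z
    proof (cases "z = x")
      case True thus ?thesis using a(3) by (simp add: g_def)
    next
      case False
      show ?thesis
      proof (cases "z = y")
        case True thus ?thesis using py by (simp add: g_def)
      next
        case F2: False
        hence "z \<notin> S" using that False by simp
        thus ?thesis using a(1) False F2 by (simp add: g_def)
      qed
    qed
    have g2: "g (g z) = z" for z
    proof (cases "z = x \<or> z = y")
      case True thus ?thesis using a(3) py by (auto simp: g_def)
    next
      case False
      have "p z \<noteq> x" using a(2) py False by metis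
      moreover have "p z \<noteq> y" using a(2) a(3) False by metis
      ultimately have "g z = p z" using False by (simp add: g_def)
      thus ?thesis using a(2) \<open>p z \<noteq> x\<close> \<open>p z \<noteq> y\<close> False by (simp add: g_def)
    qed
    have "g \<in> Inv (S - {x, y})" using g1 g2 Inv_char by blast
    thus "p \<in> (\<lambda>g. transpose x y \<circ> g) ` Inv (S - {x, y})" using pg by blast
  qed
next
  show "(\<lambda>g. transpose x y \<circ> g) ` Inv (S - {x, y}) \<subseteq> {p \<in> Inv S. p x = y}"
  proof
    fix p assume "p \<in> (\<lambda>g. transpose x y \<circ> g) ` Inv (S - {x, y})"
    then obtain g where g: "g \<in> Inv (S - {x, y})" and pg: "p = transpose x y \<circ> g" by blast
    have a: "\<forall>z. z \<notin> S - {x, y} \<longrightarrow> g z = z" "\<forall>z. g (g z) = z" using g Inv_char by auto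
    have gx: "g x = x" and gy: "g y = y" using a(1) by auto
    have p1: "p z = z" if "z \<notin> S" for z
    proof -
      have "z \<noteq> x" "z \<noteq> y" using that xS yS by auto
      thus ?thesis using a(1) that pg by simp
    qed
    have p2: "p (p z) = z" for z
    proof (cases "z = x \<or> z = y")
      case True thus ?thesis using gx gy xy pg by auto
    next
      case False
      have "g z \<noteq> x" using a(2) gx False by metis
      moreover have "g z \<noteq> y" using a(2) gy False by metis
      ultimately show ?thesis using False pg a(2) by simp
    qed
    have "p x = y" using pg gx by simp
    thus "p \<in> {p \<in> Inv S. p x = y}" using p1 p2 Inv_char by blast
  qed
qed

lemma card_Inv_gen: "\<forall>S. finite S \<longrightarrow> card S = n \<longrightarrow> card (Inv S) = tt n"
proof (induction n rule: less_induct)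
  case (less n)
  show ?case
  proof (intro allI impI)
    fix S :: "nat set" assume fS: "finite S" and cS: "card S = n"
    show "card (Inv S) = tt n"
    proof (cases n)
      case 0
      hence "S = {}" using fS cS by simp
      hence "Inv S = {id}" using Inv_char by (auto simp: fun_eq_iff)
      thus ?thesis using 0 by simp
    next
      case (Suc n')
      then obtain x where xS: "x \<in> S" using cS by (metis card.empty ex_in_conv nat.distinct(1))
      have split: "Inv S = {p \<in> Inv S. p x = x} \<union> (\<Union>y\<in>S - {x}. {p \<in> Inv S. p x = y})"
      proof
        show "Inv S \<subseteq> {p \<in> Inv S. p x = x} \<union> (\<Union>y\<in>S - {x}. {p \<in> Inv S. p x = y})"
        proof
          fix p assume p: "p \<in> Inv S"
          have "p x \<in> S"
          proof (rule ccontr)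
            assume "p x \<notin> S"
            hence "p (p x) = p x" using p Inv_char by blast
            hence "x = p x" using p Inv_char by metis
            thus False using xS \<open>p x \<notin> S\<close> by simp
          qed
          thus "p \<in> {p \<in> Inv S. p x = x} \<union> (\<Union>y\<in>S - {x}. {p \<in> Inv S. p x = y})" using p by auto
        qed
      qed auto
      have fI: "finite (Inv S)" using finite_Inv[OF fS] .
      have c1: "card (Inv S) = card {p \<in> Inv S. p x = x} + card (\<Union>y\<in>S - {x}. {p \<in> Inv S. p x = y})"
      proof (subst split, rule card_Un_disjoint)
        show "finite (\<Union>y\<in>S - {x}. {p \<in> Inv S. p x = y})" by (rule finite_subset[OF _ fI]) auto
      qed (use fI in auto)
      have "card {p \<in> Inv S. p x = x} = tt n'"
        using Inv_fix[OF xS] less.IH[of n'] Suc fS cS xS by simp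
      moreover have "card (\<Union>y\<in>S - {x}. {p \<in> Inv S. p x = y}) = (\<Sum>y\<in>S - {x}. card {p \<in> Inv S. p x = y})"
        by (rule card_UN_disjoint) (use fS fI in auto)
      moreover have "card {p \<in> Inv S. p x = y} = tt (n' - 1)" if y: "y \<in> S - {x}" for y
      proof -
        have "inj_on (\<lambda>g. transpose x y \<circ> g) (Inv (S - {x, y}))"
          by (rule inj_onI) (metis comp_assoc transpose_comp_involutory id_comp)
        hence "card {p \<in> Inv S. p x = y} = card (Inv (S - {x, y}))"
          using Inv_swap[OF xS _ _, of y] y card_image by auto
        moreover have "card (S - {x, y}) = n' - 1" using cS Suc xS y fS
          by (simp add: card_Diff_subset)
        ultimately show ?thesis using less.IH[of "n' - 1"] Suc fS by simp
      qed
      ultimately have "card (Inv S) = tt n' + (\<Sum>y\<in>S - {x}. tt (n' - 1))" using c1 by simp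
      also have "\<dots> = tt n' + n' * tt (n' - 1)" using cS Suc fS xS by simp
      finally show ?thesis using Suc by simp
    qed
  qed
qed

lemma num_involutions_tt: "num_involutions m = tt m"
proof -
  have "num_involutions m = card (Inv {..<m})" by (simp add: num_involutions_def Inv_def)
  thus ?thesis using card_Inv_gen by simp
qed


definition cc :: "nat \<Rightarrow> nat \<Rightarrow> nat" where
  "cc m i = (m choose i) * num_involutions (m - i)"

lemma choose_absorb: "(m choose i) * (m - i) = Suc i * (m choose Suc i)"
  by (metis binomial_absorb_comp binomial_absorption mult.commute)

lemma t_Suc: "num_involutions (Suc p) = num_involutions p + p * num_involutions (p - 1)"
  by (simp add: num_involutions_tt)

lemma t_0: "num_involutions 0 = 1"
  by (simp add: num_involutions_tt)

lemma cc_rec: "cc (Suc m) i = (if i = 0 then 0 else cc m (i - 1)) + cc m i + Suc i * cc m (Suc i)"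
proof (cases "Suc m < i")
  case True
  hence z: "Suc m choose i = 0" "m choose (i - 1) = 0" "m choose i = 0" "m choose Suc i = 0"
    by (simp_all add: binomial_eq_0)
  have "i \<noteq> 0" using True by simp
  thus ?thesis unfolding cc_def z by simp
next
  case False
  show ?thesis
  proof (cases "i = Suc m")
    case True thus ?thesis by (simp add: cc_def)
  next
    case False2: False
    hence im: "i \<le> m" using False by simp
    show ?thesis
    proof (cases i)
      case 0
      thus ?thesis by (simp add: cc_def t_Suc)
    next
      case (Suc j)
      have jm: "j < m" using im Suc by simp
      define q where "q = m - Suc j"
      have mj: "m - j = Suc q" using jm q_def by simp
      have "cc (Suc m) i = ((m choose j) + (m choose Suc j)) * num_involutions (Suc q)"
        using Suc mj by (simp add: cc_def)
      also have "\<dots> = (m choose j) * num_involutions (Suc q) + (m choose Suc j) * num_involutions q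
          + ((m choose Suc j) * q) * num_involutions (q - 1)"
        by (simp add: t_Suc algebra_simps)
      also have "(m choose Suc j) * q = Suc (Suc j) * (m choose Suc (Suc j))"
        using choose_absorb[of m "Suc j"] q_def by simp
      also have "q - 1 = m - Suc (Suc j)" using q_def by simp
      finally show ?thesis using Suc mj q_def by (simp add: cc_def algebra_simps)
    qed
  qed
qed

lemma alg:
  "(\<Sum>i\<le>m. cc m i * (d (Suc i) + d i + i * d (i - 1))) = (\<Sum>i\<le>Suc m. cc (Suc m) i * (d i :: nat))"
proof -
  have z: "cc m (Suc m) = 0" "cc m (Suc (Suc m)) = 0" by (simp_all add: cc_def)
  have "(\<Sum>i\<le>Suc m. cc (Suc m) i * d i) =
     (\<Sum>i\<le>Suc m. (if i = 0 then 0 else cc m (i - 1)) * d i) + (\<Sum>i\<le>Suc m. cc m i * d i)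
     + (\<Sum>i\<le>Suc m. Suc i * cc m (Suc i) * d i)"
    by (simp add: cc_rec sum.distrib algebra_simps)
  also have "(\<Sum>i\<le>Suc m. (if i = 0 then 0 else cc m (i - 1)) * d i) = (\<Sum>i\<le>m. cc m i * d (Suc i))"
    by (subst sum.atMost_Suc_shift) simp
  also have "(\<Sum>i\<le>Suc m. cc m i * d i) = (\<Sum>i\<le>m. cc m i * d i)"
    using z by simp
  also have "(\<Sum>i\<le>Suc m. Suc i * cc m (Suc i) * d i) = (\<Sum>i\<le>m. i * cc m i * d (i - 1))"
  proof -
    have "(\<Sum>i\<le>Suc m. i * cc m i * d (i - 1)) = (\<Sum>i\<le>m. Suc i * cc m (Suc i) * d i)"
      by (subst sum.atMost_Suc_shift) simp
    moreover have "(\<Sum>i\<le>Suc m. i * cc m i * d (i - 1)) = (\<Sum>i\<le>m. i * cc m i * d (i - 1))"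
      using z by simp
    moreover have "(\<Sum>i\<le>Suc m. Suc i * cc m (Suc i) * d i) = (\<Sum>i\<le>m. Suc i * cc m (Suc i) * d i)"
      using z by simp
    ultimately show ?thesis by simp
  qed
  finally show ?thesis by (simp add: sum.distrib algebra_simps)
qed

lemma main_identity: "young L \<Longrightarrow> AA m L = (\<Sum>i\<le>m. cc m i * dd i L)"
proof (induction m arbitrary: L)
  case 0
  thus ?case using AA_0 by (simp add: cc_def t_0)
next
  case (Suc m)
  have "AA (Suc m) L = (\<Sum>a\<in>addc L. AA m (insert a L))" using AA_Suc[OF Suc.prems] .
  also have "\<dots> = (\<Sum>a\<in>addc L. \<Sum>i\<le>m. cc m i * dd i (insert a L))"
    by (rule sum.cong[OF refl]) (use Suc.IH young_addc in blast)
  also have "\<dots> = (\<Sum>i\<le>m. \<Sum>a\<in>addc L. cc m i * dd i (insert a L))" by (rule sum.swap)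
  also have "\<dots> = (\<Sum>i\<le>m. cc m i * (dd (Suc i) L + dd i L + i * dd (i - 1) L))"
    by (rule sum.cong[OF refl]) (simp add: sum_distrib_left[symmetric] lemmaK[OF Suc.prems])
  also have "\<dots> = (\<Sum>i\<le>Suc m. cc (Suc m) i * dd i L)" by (rule alg)
  finally show ?case .
qed


definition EE :: "nat \<Rightarrow> (nat \<times> nat \<Rightarrow> nat) \<Rightarrow> (nat \<times> nat) set \<Rightarrow> (nat \<times> nat \<Rightarrow> nat) set" where
  "EE k T \<nu> = {T'. syt \<nu> T' \<and> restrict_le k T' = T}"

lemma young_empty: "young {}" by (simp add: young_def)

lemma syt_pos: "syt \<nu> S \<Longrightarrow> c \<in> \<nu> \<Longrightarrow> S c \<in> {1..card \<nu>}"
  using skew_range[of \<nu> "{}" S c] by (simp add: syt_def)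

lemma skew_zero:
  assumes "skew_syt \<nu> \<mu> S" "c \<notin> \<nu> - \<mu>" shows "S c = 0"
proof -
  have "\<forall>c. c \<notin> \<nu> - \<mu> \<longrightarrow> S c = 0" using assms(1) unfolding skew_syt_def by (elim conjE)
  thus ?thesis using assms(2) by blast
qed

lemma syt_zero: "syt \<nu> S \<Longrightarrow> c \<notin> \<nu> \<Longrightarrow> S c = 0"
  using skew_zero[of \<nu> "{}" S c] by (simp add: syt_def)

lemma syt_support: "syt \<nu> S \<Longrightarrow> \<nu> = {c. S c \<noteq> 0}"
proof -
  assume S: "syt \<nu> S"
  show "\<nu> = {c. S c \<noteq> 0}"
  proof
    show "\<nu> \<subseteq> {c. S c \<noteq> 0}"
    proof
      fix c assume "c \<in> \<nu>"
      hence "S c \<in> {1..card \<nu>}" by (rule syt_pos[OF S])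
      thus "c \<in> {c. S c \<noteq> 0}" by simp
    qed
    show "{c. S c \<noteq> 0} \<subseteq> \<nu>"
    proof
      fix c assume c: "c \<in> {c. S c \<noteq> 0}"
      show "c \<in> \<nu>"
      proof (rule ccontr)
        assume "c \<notin> \<nu>"
        hence "S c = 0" by (rule syt_zero[OF S])
        thus False using c by simp
      qed
    qed
  qed
qed

lemma syt_le: "syt \<nu> S \<Longrightarrow> S c \<le> card \<nu>"
  using syt_pos[of \<nu> S c] syt_zero[of \<nu> S c] by (cases "c \<in> \<nu>") auto

lemma restrict_id: "(\<And>c. S c \<le> k) \<Longrightarrow> restrict_le k S = S"
  by (simp add: restrict_le_def fun_eq_iff)

lemma restrict_upd: "S b = 0 \<Longrightarrow> k < v \<Longrightarrow> restrict_le k (S(b := v)) = restrict_le k S"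
  by (simp add: restrict_le_def fun_eq_iff)

lemma finite_EE: "finite \<nu> \<Longrightarrow> finite (EE k T \<nu>)"
proof -
  assume "finite \<nu>"
  hence "finite {S. skew_syt \<nu> {} S}" by (intro finite_skew) simp
  thus ?thesis by (rule finite_subset[rotated]) (auto simp: EE_def syt_def)
qed

lemma EE_base:
  assumes yl: "young lam" and cl: "card lam = k" and T: "syt lam T" and cn: "card \<nu> = k"
  shows "EE k T \<nu> = (if \<nu> = lam then {T} else {})"
proof -
  have sub: "EE k T \<nu> \<subseteq> {T}" and sub2: "S \<in> EE k T \<nu> \<Longrightarrow> \<nu> = lam" for S
  proof -
    show "EE k T \<nu> \<subseteq> {T}"
    proof
      fix S assume "S \<in> EE k T \<nu>"
      hence S: "syt \<nu> S" "restrict_le k S = T" by (auto simp: EE_def)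
      have "restrict_le k S = S" using syt_le[OF S(1)] cn by (intro restrict_id) auto
      thus "S \<in> {T}" using S by simp
    qed
    assume "S \<in> EE k T \<nu>"
    hence S: "syt \<nu> S" "restrict_le k S = T" by (auto simp: EE_def)
    have "restrict_le k S = S" using syt_le[OF S(1)] cn by (intro restrict_id) auto
    hence "S = T" using S by simp
    thus "\<nu> = lam" using syt_support[OF S(1)] syt_support[OF T] by simp
  qed
  have TT: "T \<in> EE k T lam"
  proof -
    have "restrict_le k T = T" using syt_le[OF T] cl by (intro restrict_id) auto
    thus ?thesis using T by (simp add: EE_def)
  qed
  show ?thesis
  proof (cases "\<nu> = lam")
    case True thus ?thesis using sub TT by auto
  next
    case False thus ?thesis using sub2 by auto
  qed
qed

lemma EE_card_gen:
  assumes yl: "young lam" and cl: "card lam = k" and T: "syt lam T"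
  shows "\<forall>\<nu>. young \<nu> \<longrightarrow> card \<nu> = k + m \<longrightarrow> card (EE k T \<nu>) = skew_f \<nu> lam"
proof (induction m)
  case 0
  show ?case
  proof (intro allI impI)
    fix \<nu> assume yn: "young \<nu>" and cn: "card \<nu> = k + 0"
    have "card lam = card \<nu>" using cn cl by simp
    thus "card (EE k T \<nu>) = skew_f \<nu> lam"
      using EE_base[OF yl cl T] cn skew_f_same[OF yn yl] by simp
  qed
next
  case (Suc m)
  show ?case
  proof (intro allI impI)
    fix \<nu> assume yn: "young \<nu>" and cn: "card \<nu> = k + Suc m"
    define v where "v = Suc (k + m)"
    have cd: "card (\<nu> - {}) = Suc (k + m)" using cn by simp
    have dec: "{S. skew_syt \<nu> {} S} = (\<Union>b\<in>remc \<nu> - {}. (\<lambda>S'. S'(b := v)) ` {S'. skew_syt (\<nu> - {b}) {} S'})"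
      using top_decomp[OF yn young_empty cd] unfolding v_def .
    have kv: "k < v" unfolding v_def by simp
    have EEdec: "EE k T \<nu> = (\<Union>b\<in>remc \<nu>. (\<lambda>S'. S'(b := v)) ` EE k T (\<nu> - {b}))"
    proof
      show "EE k T \<nu> \<subseteq> (\<Union>b\<in>remc \<nu>. (\<lambda>S'. S'(b := v)) ` EE k T (\<nu> - {b}))"
      proof
        fix S assume "S \<in> EE k T \<nu>"
        hence S: "skew_syt \<nu> {} S" "restrict_le k S = T" by (auto simp: EE_def syt_def)
        hence "S \<in> {S. skew_syt \<nu> {} S}" by simp
        hence "S \<in> (\<Union>b\<in>remc \<nu> - {}. (\<lambda>S'. S'(b := v)) ` {S'. skew_syt (\<nu> - {b}) {} S'})"
          unfolding dec .
        then obtain b S' where b: "b \<in> remc \<nu>" and S': "skew_syt (\<nu> - {b}) {} S'" and e: "S = S'(b := v)"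
          by auto
        have "S' b = 0" using skew_zero[OF S'] by simp
        hence "restrict_le k S' = T" using S(2) e restrict_upd[OF _ kv] by simp
        hence "S' \<in> EE k T (\<nu> - {b})" using S' by (simp add: EE_def syt_def)
        thus "S \<in> (\<Union>b\<in>remc \<nu>. (\<lambda>S'. S'(b := v)) ` EE k T (\<nu> - {b}))" using b e by blast
      qed
    next
      show "(\<Union>b\<in>remc \<nu>. (\<lambda>S'. S'(b := v)) ` EE k T (\<nu> - {b})) \<subseteq> EE k T \<nu>"
      proof
        fix S assume "S \<in> (\<Union>b\<in>remc \<nu>. (\<lambda>S'. S'(b := v)) ` EE k T (\<nu> - {b}))"
        then obtain b S' where b: "b \<in> remc \<nu>" and S': "S' \<in> EE k T (\<nu> - {b})" and e: "S = S'(b := v)"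
          by auto
        have S'1: "skew_syt (\<nu> - {b}) {} S'" "restrict_le k S' = T" using S' by (auto simp: EE_def syt_def)
        have "S \<in> (\<Union>b\<in>remc \<nu> - {}. (\<lambda>S'. S'(b := v)) ` {S'. skew_syt (\<nu> - {b}) {} S'})"
          using b S'1(1) e by auto
        hence "S \<in> {S. skew_syt \<nu> {} S}" unfolding dec .
        moreover have "S' b = 0" using skew_zero[OF S'1(1)] by simp
        hence "restrict_le k S = T" using S'1(2) e restrict_upd[OF _ kv] by simp
        ultimately show "S \<in> EE k T \<nu>" by (simp add: EE_def syt_def)
      qed
    qed
    have "card (EE k T \<nu>) = (\<Sum>b\<in>remc \<nu>. card (EE k T (\<nu> - {b})))"
      unfolding EEdec
    proof (rule card_UN_upd)
      show "finite (remc \<nu>)" using finite_remc[OF yn] .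
      show "\<And>b. b \<in> remc \<nu> \<Longrightarrow> finite (EE k T (\<nu> - {b}))"
        using young_finite[OF yn] by (intro finite_EE) simp
      show "\<And>b S. b \<in> remc \<nu> \<Longrightarrow> S \<in> EE k T (\<nu> - {b}) \<Longrightarrow> S b = 0"
      proof -
        fix b S assume "b \<in> remc \<nu>" "S \<in> EE k T (\<nu> - {b})"
        hence "syt (\<nu> - {b}) S" by (simp add: EE_def)
        thus "S b = 0" by (rule syt_zero) simp
      qed
      show "\<And>b b' S. b \<in> remc \<nu> \<Longrightarrow> b' \<in> remc \<nu> \<Longrightarrow> b \<noteq> b' \<Longrightarrow> S \<in> EE k T (\<nu> - {b'}) \<Longrightarrow> S b \<noteq> v"
      proof -
        fix b b' S assume b: "b \<in> remc \<nu>" "b' \<in> remc \<nu>" "b \<noteq> b'" "S \<in> EE k T (\<nu> - {b'})"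
        have Ss: "syt (\<nu> - {b'}) S" using b(4) by (simp add: EE_def)
        have "b \<in> \<nu> - {b'}" using b by (auto simp: remc_def)
        hence "S b \<le> card (\<nu> - {b'})" using syt_pos[OF Ss] by auto
        moreover have "card (\<nu> - {b'}) = k + m" using card_remove_remc[OF yn b(2)] cn by simp
        ultimately show "S b \<noteq> v" unfolding v_def by simp
      qed
      show "v \<noteq> 0" unfolding v_def by simp
    qed
    also have "\<dots> = (\<Sum>b\<in>remc \<nu>. skew_f (\<nu> - {b}) lam)"
    proof (rule sum.cong[OF refl])
      fix b assume b: "b \<in> remc \<nu>"
      have "card (\<nu> - {b}) = k + m" using card_remove_remc[OF yn b] cn by simp
      thus "card (EE k T (\<nu> - {b})) = skew_f (\<nu> - {b}) lam" using Suc.IH young_remc[OF b] by blast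
    qed
    also have "\<dots> = skew_f \<nu> lam"
      using skew_f_top[OF yn yl] cn cl by simp
    finally show "card (EE k T \<nu>) = skew_f \<nu> lam" .
  qed
qed

theorem mainTheorem15:
  fixes lam :: "(nat \<times> nat) set" and T :: "nat \<times> nat \<Rightarrow> nat" and k n :: nat
  assumes "young lam" and "card lam = k" and "syt lam T" and "k \<le> n"
  shows "card {T'. \<exists>D. young D \<and> card D = n \<and> syt D T' \<and> restrict_le k T' = T}
    = (\<Sum>j = 0..k. \<Sum>mu \<in> {mu. young mu \<and> card mu = j}.
         skew_f lam mu * ((n - k) choose (k - j)) * num_involutions (n + j - 2 * k))"
proof -
  note yl = assms(1) and cl = assms(2) and T = assms(3) and kn = assms(4)
  define m where "m = n - k"
  have set_eq: "{T'. \<exists>D. young D \<and> card D = n \<and> syt D T' \<and> restrict_le k T' = T} = (\<Union>\<nu>\<in>Y n. EE k T \<nu>)"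
    by (auto simp: Y_def EE_def)
  have "card (\<Union>\<nu>\<in>Y n. EE k T \<nu>) = (\<Sum>\<nu>\<in>Y n. card (EE k T \<nu>))"
  proof (rule card_UN_disjoint[OF finite_Y])
    show "\<forall>\<nu>\<in>Y n. finite (EE k T \<nu>)" using young_finite finite_EE by (auto simp: Y_def)
    show "\<forall>\<nu>\<in>Y n. \<forall>\<nu>'\<in>Y n. \<nu> \<noteq> \<nu>' \<longrightarrow> EE k T \<nu> \<inter> EE k T \<nu>' = {}"
    proof (intro ballI impI)
      fix \<nu> \<nu>' assume "\<nu> \<in> Y n" "\<nu>' \<in> Y n" and ne: "\<nu> \<noteq> \<nu>'"
      show "EE k T \<nu> \<inter> EE k T \<nu>' = {}"
      proof (rule ccontr)
        assume "\<not> ?thesis"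
        then obtain S where "S \<in> EE k T \<nu>" "S \<in> EE k T \<nu>'" by blast
        hence "syt \<nu> S" "syt \<nu>' S" by (auto simp: EE_def)
        hence "\<nu> = \<nu>'" using syt_support by metis
        thus False using ne by simp
      qed
    qed
  qed
  also have "\<dots> = (\<Sum>\<nu>\<in>Y n. skew_f \<nu> lam)"
  proof (rule sum.cong[OF refl])
    fix \<nu> assume "\<nu> \<in> Y n"
    hence "young \<nu>" "card \<nu> = k + m" using kn by (auto simp: Y_def m_def)
    thus "card (EE k T \<nu>) = skew_f \<nu> lam" using EE_card_gen[OF yl cl T, of m] by blast
  qed
  also have "\<dots> = AA m lam" unfolding AA_def using cl kn m_def by simp
  also have "\<dots> = (\<Sum>i\<le>m. cc m i * dd i lam)" using main_identity[OF yl] .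
  also have "\<dots> = (\<Sum>i\<le>n. cc m i * dd i lam)"
    by (rule sum.mono_neutral_left) (auto simp: m_def cc_def)
  also have "\<dots> = (\<Sum>i\<le>k. cc m i * dd i lam)"
    by (rule sum.mono_neutral_right) (use kn dd_zero[OF yl] cl in auto)
  also have "\<dots> = (\<Sum>i=0..k. cc m i * dd i lam)" by (simp add: atLeast0AtMost)
  also have "\<dots> = (\<Sum>j=0..k. cc m (k - j) * dd (k - j) lam)"
    by (subst sum.atLeastAtMost_rev) simp
  also have "\<dots> = (\<Sum>j = 0..k. \<Sum>mu \<in> {mu. young mu \<and> card mu = j}.
         skew_f lam mu * ((n - k) choose (k - j)) * num_involutions (n + j - 2 * k))"
  proof (rule sum.cong[OF refl])
    fix j assume j: "j \<in> {0..k}"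
    have e1: "{mu. young mu \<and> card mu = j} = Y (card lam - (k - j))" using j cl by (auto simp: Y_def)
    have e2: "n + j - 2 * k = m - (k - j)" using j kn m_def by auto
    have "(\<Sum>mu \<in> {mu. young mu \<and> card mu = j}.
         skew_f lam mu * ((n - k) choose (k - j)) * num_involutions (n + j - 2 * k))
        = (\<Sum>mu \<in> Y (card lam - (k - j)). skew_f lam mu) * cc m (k - j)"
      unfolding e1 e2 by (simp add: sum_distrib_right cc_def m_def mult.assoc)
    also have "\<dots> = dd (k - j) lam * cc m (k - j)" using dd_skew[OF yl, of "k - j"] cl by simp
    finally show "cc m (k - j) * dd (k - j) lam = (\<Sum>mu \<in> {mu. young mu \<and> card mu = j}.
         skew_f lam mu * ((n - k) choose (k - j)) * num_involutions (n + j - 2 * k))" by simp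
  qed
  finally show ?thesis using set_eq by simp
qed

end
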